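(* In the construction below, $\hat{\mathcal D}$ is $1$-expanding with respect to $(X,d)$: for any two directed paths $\gamma_1,\gamma_2$ in $\mathcal D$ from the root to vertices $(x_1,K),(x_2,K)$ respectively, $\mathrm{dist}_{\hat{\mathcal D}}(\gamma_1,\gamma_2)\ge d(x_1,x_2)$.
   Context: Construction. Let $(X,d)$ be a metric space with $n=|X|\ge2$ and $\mathrm{diam}(X)=1$. For $S\subseteq X$, $r\ge0$: $B_X(S,r):=\{x\in X:\exists s\in S,\ d(x,s)\le r\}$ and $B_X(x,r):=B_X(\{x\},r)$. Let $\varepsilon_0:=\min\{d(x,y):x\ne y\}$, $\tau:=12$, $K:=1+\lceil\log_\tau(1/\varepsilon_0)\rceil$. For $\eta>0$ the greedy $\eta$-net is built as: $N_0=\emptyset$; for $j\ge1$, $S_j:=X\setminus B_X(N_{j-1},\eta)$; if $S_j=\emptyset$ output $N_{j-1}$; else pick $x_j\in S_j$ maximizing $|B_X(x,\eta/3)|$ and set $N_j=N_{j-1}\cup\{x_j\}$. For $k=0,\dots,K$ let $U_k$ be the greedy $\tau^{-k}$-net. For $k<K$, $A_k$ is the set of pairs $(u,u')\in U_k\times U_{k+1}$ with (i) $d(u,u')\le4\tau^{-k}$ and (ii) $|B_X(u,\tau^{-k}/3)|\ge\max\{|B_X(w,\tau^{-k}/3)|:w\in B_X(u',6\tau^{-(k+1)})\}$. The directed graph $\mathcal D$ has vertex set $\{(u,k):u\in U_k,\ 0\le k\le K\}$, arcs $((u,k),(u',k+1))$ for $(u,u')\in A_k$, root $(u,0)$ with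 $U_0=\{u\}$, and the vertices $(x,K)$ are identified with $x\in X$. Arc weights: $\omega_{(u,k)(u',k+1)}:=10\tau^{-k}$. For two root-to-level-$K$ paths $\gamma_1\ne\gamma_2$, let $a$ be the first vertex at which they diverge, with arcs $av_1\in\gamma_1$, $av_2\in\gamma_2$, $v_1\ne v_2$; $\mathrm{dist}_{\hat{\mathcal D}}(\gamma_1,\gamma_2):=\max(\omega_{av_1},\omega_{av_2})$, and $\mathrm{dist}_{\hat{\mathcal D}}(\gamma,\gamma):=0$. *)

theory Defs
  imports Complex_Main
begin

definition fin_metric :: "'a set \<Rightarrow> ('a \<Rightarrow> 'a \<Rightarrow> real) \<Rightarrow> bool" where
  "fin_metric X d \<longleftrightarrow> finite X \<and>
     (\<forall>x\<in>X. \<forall>y\<in>X. d x y \<ge> 0 \<and> (d x y = 0 \<longleftrightarrow> x = y) \<and> d x y = d y x) \<and>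
     (\<forall>x\<in>X. \<forall>y\<in>X. \<forall>z\<in>X. d x z \<le> d x y + d y z)"

definition diam :: "'a set \<Rightarrow> ('a \<Rightarrow> 'a \<Rightarrow> real) \<Rightarrow> real" where
  "diam X d = Max {d x y | x y. x \<in> X \<and> y \<in> X}"

definition ballS :: "'a set \<Rightarrow> ('a \<Rightarrow> 'a \<Rightarrow> real) \<Rightarrow> 'a set \<Rightarrow> real \<Rightarrow> 'a set" where
  "ballS X d S r = {x \<in> X. \<exists>s\<in>S. d x s \<le> r}"

definition ballX :: "'a set \<Rightarrow> ('a \<Rightarrow> 'a \<Rightarrow> real) \<Rightarrow> 'a \<Rightarrow> real \<Rightarrow> 'a set" where
  "ballX X d x r = ballS X d {x} r"

definition eps0 :: "'a set \<Rightarrow> ('a \<Rightarrow> 'a \<Rightarrow> real) \<Rightarrow> real" where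
  "eps0 X d = Min {d x y | x y. x \<in> X \<and> y \<in> X \<and> x \<noteq> y}"

definition tau :: real where "tau = 12"

definition levelK :: "'a set \<Rightarrow> ('a \<Rightarrow> 'a \<Rightarrow> real) \<Rightarrow> nat" where
  "levelK X d = 1 + nat \<lceil>log tau (1 / eps0 X d)\<rceil>"

text \<open>N is an output of the greedy eta-net procedure (with some choice of the
  maximiser at each step): xs lists the chosen points x_1, x_2, ... in order.\<close>
definition greedy_net :: "'a set \<Rightarrow> ('a \<Rightarrow> 'a \<Rightarrow> real) \<Rightarrow> real \<Rightarrow> 'a set \<Rightarrow> bool" where
  "greedy_net X d eta N \<longleftrightarrow> (\<exists>xs. N = set xs \<and>
     (\<forall>j < length xs.
        xs ! j \<in> X - ballS X d (set (take j xs)) eta \<and>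
        (\<forall>y \<in> X - ballS X d (set (take j xs)) eta.
            card (ballX X d y (eta/3)) \<le> card (ballX X d (xs ! j) (eta/3)))) \<and>
     X - ballS X d (set xs) eta = {})"

definition arcA :: "'a set \<Rightarrow> ('a \<Rightarrow> 'a \<Rightarrow> real) \<Rightarrow> (nat \<Rightarrow> 'a set) \<Rightarrow> nat \<Rightarrow> 'a \<Rightarrow> 'a \<Rightarrow> bool" where
  "arcA X d U k u u' \<longleftrightarrow> u \<in> U k \<and> u' \<in> U (Suc k) \<and>
     d u u' \<le> 4 * tau powr (- real k) \<and>
     card (ballX X d u (tau powr (- real k) / 3)) \<ge>
       Max ((\<lambda>w. card (ballX X d w (tau powr (- real k) / 3))) `
              ballX X d u' (6 * tau powr (- real (Suc k))))"

text \<open>A directed path from the root (level 0) to level K, given as the list of the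
  first components of its vertices (u_0,0),(u_1,1),...,(u_K,K).\<close>
definition root_path :: "'a set \<Rightarrow> ('a \<Rightarrow> 'a \<Rightarrow> real) \<Rightarrow> (nat \<Rightarrow> 'a set) \<Rightarrow> 'a list \<Rightarrow> bool" where
  "root_path X d U \<gamma> \<longleftrightarrow> length \<gamma> = Suc (levelK X d) \<and>
     (\<forall>k \<le> levelK X d. \<gamma> ! k \<in> U k) \<and>
     (\<forall>k < levelK X d. arcA X d U k (\<gamma> ! k) (\<gamma> ! Suc k))"

definition arc_weight :: "nat \<Rightarrow> real" where
  "arc_weight k = 10 * tau powr (- real k)"

text \<open>dist between two root paths: if distinct, let a be the vertex at level k where they
  diverge (they agree up to level k and differ at level k+1); the two arcs a v1, a v2
  leave level k, and the distance is the max of their weights.\<close>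
definition distD :: "'a list \<Rightarrow> 'a list \<Rightarrow> real" where
  "distD \<gamma>1 \<gamma>2 = (if \<gamma>1 = \<gamma>2 then 0 else
     (let k = (LEAST k. \<gamma>1 ! Suc k \<noteq> \<gamma>2 ! Suc k) in max (arc_weight k) (arc_weight k)))"

end

theory Submission
  imports Defs
begin

lemma tau_pow: "tau powr (- real k) = 1 / 12 ^ k"
  by (simp add: tau_def powr_minus powr_realpow divide_inverse)

lemma chain_bound:
  fixes \<gamma> :: "'a list"
  assumes met: "fin_metric X d"
    and arc: "\<forall>j<K. d (\<gamma>!j) (\<gamma>!Suc j) \<le> 4 / 12^j"
    and inX: "\<forall>j\<le>K. \<gamma>!j \<in> X"
    and kj: "k \<le> j" and jK: "j \<le> K"
  shows "d (\<gamma>!k) (\<gamma>!j) \<le> 48/11 * (1/12^k - 1/12^j)"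
  using kj jK
proof (induction j rule: dec_induct)
  case base
  have g: "\<gamma>!k \<in> X" using inX base by auto
  have "d (\<gamma>!k) (\<gamma>!k) = 0" using met g unfolding fin_metric_def by blast
  then show ?case by simp
next
  case (step j)
  have X3: "\<gamma>!k \<in> X" "\<gamma>!j \<in> X" "\<gamma>!Suc j \<in> X" using inX step by auto
  have tri: "d (\<gamma>!k) (\<gamma>!Suc j) \<le> d (\<gamma>!k) (\<gamma>!j) + d (\<gamma>!j) (\<gamma>!Suc j)"
    using met X3(1,2,3) unfolding fin_metric_def by (meson)
  have a: "d (\<gamma>!j) (\<gamma>!Suc j) \<le> 4 / 12^j" using arc step by auto
  have ih: "d (\<gamma>!k) (\<gamma>!j) \<le> 48/11 * (1/12^k - 1/12^j)" using step by auto
  have eq: "48/11 * (1/12^k - 1/12^j) + 4/12^j = 48/11 * (1/12^k - 1/(12::real)^Suc j)"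
    by (simp add: field_simps)
  show ?case using tri a ih eq by linarith
qed

lemma net_subset:
  assumes "greedy_net X d eta N" shows "N \<subseteq> X"
proof
  fix x assume "x \<in> N"
  then obtain xs where N: "N = set xs" and H: "\<forall>j < length xs. xs ! j \<in> X - ballS X d (set (take j xs)) eta"
    using assms unfolding greedy_net_def by blast
  then show "x \<in> X" using \<open>x \<in> N\<close> by (metis DiffD1 in_set_conv_nth)
qed

lemma d_le_diam:
  assumes "fin_metric X d" "x \<in> X" "y \<in> X"
  shows "d x y \<le> diam X d"
proof -
  have "{d x y | x y. x \<in> X \<and> y \<in> X} = (\<lambda>(x,y). d x y) ` (X \<times> X)" by auto
  moreover have "finite X" using assms unfolding fin_metric_def by auto
  ultimately have "finite {d x y | x y. x \<in> X \<and> y \<in> X}" by simp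
  then show ?thesis unfolding diam_def using assms by (intro Max_ge) auto
qed

lemma net0_single:
  assumes met: "fin_metric X d" and dm: "diam X d = 1"
    and g: "greedy_net X d 1 N" and a: "a \<in> N" and b: "b \<in> N"
  shows "a = b"
proof -
  obtain xs where N: "N = set xs" and H: "\<forall>j < length xs. xs ! j \<in> X - ballS X d (set (take j xs)) 1"
    using g unfolding greedy_net_def by blast
  have "length xs \<le> 1"
  proof (rule ccontr)
    assume "\<not> length xs \<le> 1"
    then have l: "1 < length xs" by simp
    then have h1: "xs!1 \<in> X - ballS X d (set (take 1 xs)) 1" using H by blast
    have l0: "0 < length xs" using l by linarith
    have h0: "xs!0 \<in> X" using H l0 by blast
    have t: "take 1 xs = [xs!0]" using l by (cases xs) auto
    have "d (xs!1) (xs!0) \<le> 1" using d_le_diam[OF met, of "xs!1" "xs!0"] h1 h0 dm by auto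
    then show False using h1 h0 t unfolding ballS_def by auto
  qed
  then show ?thesis using a b N by (cases xs) auto
qed

lemma lin_aux:
  fixes t p q a b :: real
  assumes "t \<le> p + q" "p \<le> 48/11*(a-b)" "q \<le> 48/11*(a-b)" "0 < b"
  shows "t \<le> 96/11*a"
proof -
  have "48/11*(a-b) = 48/11*a - 48/11*b" by (simp add: right_diff_distrib)
  moreover have "48/11*b > 0" using assms(4) by simp
  ultimately show ?thesis using assms(1,2,3) by linarith
qed

theorem lemma3p7:
  fixes X :: "'a set" and d :: "'a \<Rightarrow> 'a \<Rightarrow> real" and U :: "nat \<Rightarrow> 'a set"
    and \<gamma>1 \<gamma>2 :: "'a list" and x1 x2 :: 'a
  assumes "fin_metric X d"
    and "card X \<ge> 2"
    and "diam X d = 1"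
    and "\<forall>k \<le> levelK X d. greedy_net X d (tau powr (- real k)) (U k)"
    and "root_path X d U \<gamma>1" and "root_path X d U \<gamma>2"
    and "\<gamma>1 ! levelK X d = x1" and "\<gamma>2 ! levelK X d = x2"
  shows "distD \<gamma>1 \<gamma>2 \<ge> d x1 x2"
proof (cases "\<gamma>1 = \<gamma>2")
  case True
  then have "x1 = x2" using assms(7,8) by simp
  moreover have "x1 \<in> X" using assms(4,5,7) net_subset unfolding root_path_def by blast
  ultimately have "d x1 x2 = 0" using assms(1) unfolding fin_metric_def by blast
  then show ?thesis using True unfolding distD_def by simp
next
  case False
  define K where "K = levelK X d"
  have UX: "\<And>k. k \<le> K \<Longrightarrow> U k \<subseteq> X" using assms(4) net_subset K_def by blast
  have len1: "length \<gamma>1 = Suc K" and len2: "length \<gamma>2 = Suc K"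
    using assms(5,6) K_def unfolding root_path_def by auto
  have in1: "\<forall>j\<le>K. \<gamma>1!j \<in> X" using assms(5) UX K_def unfolding root_path_def by blast
  have in2: "\<forall>j\<le>K. \<gamma>2!j \<in> X" using assms(6) UX K_def unfolding root_path_def by blast
  have arc1: "\<forall>j<K. d (\<gamma>1!j) (\<gamma>1!Suc j) \<le> 4 / 12^j"
  proof (intro allI impI)
    fix j assume "j < K"
    then have "arcA X d U j (\<gamma>1!j) (\<gamma>1!Suc j)" using assms(5) K_def unfolding root_path_def by blast
    then have "d (\<gamma>1!j) (\<gamma>1!Suc j) \<le> 4 * tau powr (- real j)" unfolding arcA_def by blast
    then show "d (\<gamma>1!j) (\<gamma>1!Suc j) \<le> 4 / 12^j" unfolding tau_pow by simp
  qed
  have arc2: "\<forall>j<K. d (\<gamma>2!j) (\<gamma>2!Suc j) \<le> 4 / 12^j"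
  proof (intro allI impI)
    fix j assume "j < K"
    then have "arcA X d U j (\<gamma>2!j) (\<gamma>2!Suc j)" using assms(6) K_def unfolding root_path_def by blast
    then have "d (\<gamma>2!j) (\<gamma>2!Suc j) \<le> 4 * tau powr (- real j)" unfolding arcA_def by blast
    then show "d (\<gamma>2!j) (\<gamma>2!Suc j) \<le> 4 / 12^j" unfolding tau_pow by simp
  qed
  have g0': "greedy_net X d (tau powr (- real (0::nat))) (U 0)" using assms(4) by blast
  have g0: "greedy_net X d 1 (U 0)" using g0' unfolding tau_pow by simp
  have z: "\<gamma>1!0 = \<gamma>2!0"
  proof -
    have "\<gamma>1!0 \<in> U 0" "\<gamma>2!0 \<in> U 0" using assms(5,6) unfolding root_path_def by blast+
    then show ?thesis using net0_single[OF assms(1) assms(3) g0] by blast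
  qed
  have "\<exists>i. i < Suc K \<and> \<gamma>1!i \<noteq> \<gamma>2!i"
  proof (rule ccontr)
    assume "\<nexists>i. i < Suc K \<and> \<gamma>1!i \<noteq> \<gamma>2!i"
    then have "\<gamma>1 = \<gamma>2" using len1 len2 by (intro nth_equalityI) auto
    then show False using False by blast
  qed
  then obtain i where i: "i < Suc K" "\<gamma>1!i \<noteq> \<gamma>2!i" by blast
  then obtain i' where i': "i = Suc i'" using z by (cases i) auto
  define k where "k = (LEAST k. \<gamma>1 ! Suc k \<noteq> \<gamma>2 ! Suc k)"
  have kle: "k \<le> i'" unfolding k_def using i i' by (intro Least_le) auto
  have kK: "k < K" using kle i i' by auto
  have same: "\<gamma>1!k = \<gamma>2!k"
  proof (cases k)
    case 0 then show ?thesis using z by simp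
  next
    case (Suc m)
    have "m < k" using Suc by simp
    then show ?thesis using not_less_Least[of m "\<lambda>k. \<gamma>1 ! Suc k \<noteq> \<gamma>2 ! Suc k"] Suc k_def by auto
  qed
  have b1: "d (\<gamma>1!k) x1 \<le> 48/11 * (1/12^k - 1/12^K)"
    using chain_bound[OF assms(1) arc1 in1, of k K] kK assms(7) K_def by auto
  have b2: "d (\<gamma>2!k) x2 \<le> 48/11 * (1/12^k - 1/12^K)"
    using chain_bound[OF assms(1) arc2 in2, of k K] kK assms(8) K_def by auto
  have m: "\<gamma>1!k \<in> X" "x1 \<in> X" "x2 \<in> X" using in1 in2 kK assms(7,8) K_def by auto
  have tri: "d x1 x2 \<le> d x1 (\<gamma>1!k) + d (\<gamma>1!k) x2"
    using assms(1) m unfolding fin_metric_def by meson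
  have sym: "d x1 (\<gamma>1!k) = d (\<gamma>1!k) x1" using assms(1) m unfolding fin_metric_def by blast
  have pos: "(0::real) < 1/12^K" by simp
  have b2': "d (\<gamma>1!k) x2 \<le> 48/11 * (1/12^k - 1/12^K)" using b2 same by simp
  have "d x1 x2 \<le> 96/11 * (1/12^k)" using lin_aux[OF _ b1 b2' pos] tri sym by simp
  also have "\<dots> \<le> 10 * (1/12^k)" by (rule mult_right_mono) auto
  finally have "d x1 x2 \<le> arc_weight k" unfolding arc_weight_def tau_pow by simp
  then show ?thesis using False unfolding distD_def k_def Let_def by simp
qed

end
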